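(* Let $\mathcal{A}$ and $\mathcal{B}$ be sharp qubit observables given by unit vectors $\vec a,\vec b\in\mathbb{R}^3$, with a priori probabilities $\eta$ for $\mathcal{A}$ and $1-\eta$ for $\mathcal{B}$, and let $\theta_{\vec a\vec b}$ be the angle between $\vec a$ and $\vec b$. Then the (optimal) success probability of unambiguous identification of $\mathcal{A}$ in two shots is $$P_{\rm succ}=\eta\sin^2\theta_{\vec a\vec b}.$$ That is, the maximum of $\eta\,p^{\mathcal{A}}_\varrho(R)$ over states $\varrho$ on $\mathbb{C}^2\otimes\mathbb{C}^2$ and $R\in\{R_{\rm same},R_{\rm diff}\}$ subject to $p^{\mathcal{B}}_\varrho(R)=0$ equals $\eta\sin^2\theta_{\vec a\vec b}$.
   Context: A sharp qubit observable given by a unit vector $\vec a\in\mathbb{R}^3$ has two outcomes with effects $\mathcal{A}_1=\frac12(I+\vec a\cdot\vec\sigma)$, $\mathcal{A}_2=\frac12(I-\vec a\cdot\vec\sigma)$ on $\mathbb{C}^2$ ($\vec\sigma$ the vector of Pauli matrices); likewise $\mathcal{B}_{1,2}=\frac12(I\pm\vec b\cdot\vec\sigma)$. For a state $\varrho$ on $\mathbb{C}^2\otimes\mathbb{C}^2$, $p^{\mathcal{A}}_\varrho(R_{\rm same})=\mathrm{tr}[\varrho(\mathcal{A}_1\otimes\mathcal{A}_1+\mathcal{A}_2\otimes\mathcal{A}_2)]$ and $p^{\mathcal{A}}_\varrho(R_{\rm diff})=\mathrm{tr}[\varrho(\mathcal{A}_1\otimes\mathcal{A}_2+\mathcal{A}_2\otimes\mathcal{A}_1)]$,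 similarly for $\mathcal{B}$. Unambiguous identification of $\mathcal{A}$ in two shots: the unknown apparatus (known to be $\mathcal{A}$ or $\mathcal{B}$, outcome labels unknown) is applied to both halves of the probe state; one of the two results ("same" or "different") is declared conclusive for "the apparatus is $\mathcal{A}$", which requires it to have probability zero for $\mathcal{B}$, and the other result is inconclusive. The success probability is $\eta$ times the probability of the conclusive result under $\mathcal{A}$. *)

theory Defs
  imports "HOL-Analysis.Analysis"
begin

definition sigma_x :: "complex^2^2" where
  "sigma_x = (\<chi> i j. if i \<noteq> j then 1 else 0)"

definition sigma_y :: "complex^2^2" where
  "sigma_y = (\<chi> i j. if i = 0 \<and> j = 1 then - \<i> else if i = 1 \<and> j = 0 then \<i> else 0)"

definition sigma_z :: "complex^2^2" where
  "sigma_z = (\<chi> i j. if i = j then (if i = 0 then 1 else -1) else 0)"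

definition bloch :: "real^3 \<Rightarrow> complex^2^2" where
  "bloch a = a$1 *\<^sub>R sigma_x + a$2 *\<^sub>R sigma_y + a$3 *\<^sub>R sigma_z"

definition effect1 :: "real^3 \<Rightarrow> complex^2^2" where
  "effect1 a = (1/2) *\<^sub>R (mat 1 + bloch a)"

definition effect2 :: "real^3 \<Rightarrow> complex^2^2" where
  "effect2 a = (1/2) *\<^sub>R (mat 1 - bloch a)"

definition kron :: "complex^2^2 \<Rightarrow> complex^2^2 \<Rightarrow> complex^(2\<times>2)^(2\<times>2)" where
  "kron A B = (\<chi> p q. A$(fst p)$(fst q) * B$(snd p)$(snd q))"

definition trace :: "complex^'n^'n \<Rightarrow> complex" where
  "trace M = (\<Sum>i\<in>UNIV. M$i$i)"

definition is_state :: "complex^(2\<times>2)^(2\<times>2) \<Rightarrow> bool" where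
  "is_state \<rho> \<longleftrightarrow>
     (\<forall>i j. \<rho>$i$j = cnj (\<rho>$j$i)) \<and>
     (\<forall>v :: complex^(2\<times>2). 0 \<le> Re (\<Sum>i\<in>UNIV. \<Sum>j\<in>UNIV. cnj (v$i) * \<rho>$i$j * v$j)) \<and>
     trace \<rho> = 1"

datatype result = R_same | R_diff

definition result_op :: "real^3 \<Rightarrow> result \<Rightarrow> complex^(2\<times>2)^(2\<times>2)" where
  "result_op a R = (case R of
      R_same \<Rightarrow> kron (effect1 a) (effect1 a) + kron (effect2 a) (effect2 a)
    | R_diff \<Rightarrow> kron (effect1 a) (effect2 a) + kron (effect2 a) (effect1 a))"

text \<open>p^a_rho(R) = tr[rho (result operator)] (real for states; we take the real part).\<close>
definition prob :: "real^3 \<Rightarrow> complex^(2\<times>2)^(2\<times>2) \<Rightarrow> result \<Rightarrow> real" where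
  "prob a \<rho> R = Re (trace (\<rho> ** result_op a R))"

definition vec_angle :: "real^3 \<Rightarrow> real^3 \<Rightarrow> real" where
  "vec_angle a b = arccos ((a \<bullet> b) / (norm a * norm b))"

end

theory Submission
  imports Defs
begin

lemma two_eq0: "(2::2) = 0" by simp
lemma UNIV2: "(UNIV::2 set) = {0,1}" using exhaust_2 two_eq0 by auto
lemma sum2: "sum f (UNIV::2 set) = f 0 + f 1" by (simp add: UNIV2)
lemma sum22: "sum f (UNIV::(2\<times>2) set) = f (0,0) + f (0,1) + f (1,0) + f (1,1)"
proof -
  have "sum f (UNIV::(2\<times>2) set) = (\<Sum>x\<in>UNIV. \<Sum>y\<in>UNIV. f (x,y))"
    unfolding UNIV_Times_UNIV[symmetric] sum.cartesian_product by simp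
  then show ?thesis by (simp add: sum2 add.assoc)
qed
lemma ex2: "(x::2) = 0 \<or> x = 1" using UNIV2 by auto
lemma norm3: "norm (v::real^3) ^2 = v$1^2 + v$2^2 + v$3^2"
  by (simp add: norm_vec_def L2_set_def sum_3)
lemma inner3: "(u::real^3) \<bullet> v = u$1 * v$1 + u$2 * v$2 + u$3 * v$3"
  by (simp add: inner_vec_def sum_3)

lemma bloch_e[simp]:
  "bloch u $ 0 $ 0 = complex_of_real (u$3)"
  "bloch u $ 1 $ 1 = - complex_of_real (u$3)"
  "bloch u $ 0 $ 1 = Complex (u$1) (- u$2)"
  "bloch u $ 1 $ 0 = Complex (u$1) (u$2)"
  by (simp_all add: bloch_def sigma_x_def sigma_y_def sigma_z_def complex_eq_iff)

lemma all2: "(\<forall>i::2. P i) \<longleftrightarrow> P 0 \<and> P 1" using ex2 by metis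
lemma vec2_eq: "(A::'a^2^2) = B \<longleftrightarrow> A$0$0 = B$0$0 \<and> A$0$1 = B$0$1 \<and> A$1$0 = B$1$0 \<and> A$1$1 = B$1$1"
  by (simp add: vec_eq_iff all2)

lemma mat1_e[simp]: "(mat 1 :: complex^2^2)$0$0 = 1" "(mat 1 :: complex^2^2)$1$1 = 1"
   "(mat 1 :: complex^2^2)$0$1 = 0" "(mat 1 :: complex^2^2)$1$0 = 0"
  by (simp_all add: mat_def)

lemma bloch_anti: "bloch u ** bloch v + bloch v ** bloch u = (2*(u \<bullet> v)) *\<^sub>R mat 1"
  by (simp add: vec2_eq matrix_matrix_mult_def sum2 inner3 complex_eq_iff algebra_simps)

lemma bloch_sq: "bloch u ** bloch u = (u \<bullet> u) *\<^sub>R mat 1"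
  by (simp add: vec2_eq matrix_matrix_mult_def sum2 inner3 complex_eq_iff algebra_simps power2_eq_square)

lemma bloch_lin: "bloch (u - r *\<^sub>R v) = bloch u - r *\<^sub>R bloch v"
  by (simp add: vec2_eq complex_eq_iff)

lemma kron_mult: "kron A B ** kron C D = kron (A ** C) (B ** D)"
  by (simp add: vec_eq_iff matrix_matrix_mult_def kron_def sum22 sum2 algebra_simps)

lemma kron_add1: "kron (A + B) C = kron A C + kron B C"
  by (simp add: vec_eq_iff kron_def algebra_simps)
lemma kron_add2: "kron A (B + C) = kron A B + kron A C"
  by (simp add: vec_eq_iff kron_def algebra_simps)
lemma kron_diff1: "kron (A - B) C = kron A C - kron B C"
  by (simp add: vec_eq_iff kron_def algebra_simps)
lemma kron_diff2: "kron A (B - C) = kron A B - kron A C"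
  by (simp add: vec_eq_iff kron_def algebra_simps)
lemma kron_scale1: "kron (r *\<^sub>R A) C = r *\<^sub>R kron A C"
  by (simp add: vec_eq_iff kron_def algebra_simps)
lemma kron_scale2: "kron A (r *\<^sub>R C) = r *\<^sub>R kron A C"
  by (simp add: vec_eq_iff kron_def algebra_simps)
lemma kron_zero1: "kron 0 C = 0" by (simp add: vec_eq_iff kron_def)
lemma kron_zero2: "kron C 0 = 0" by (simp add: vec_eq_iff kron_def)
lemma kron_id: "kron (mat 1) (mat 1) = mat 1"
  by (simp add: vec_eq_iff kron_def mat_def prod_eq_iff)

lemma tr_kron: "trace (kron A B) = trace A * trace B"
  by (simp add: trace_def kron_def sum22 sum2 algebra_simps)

lemma tr_add: "trace (A + B) = trace A + trace B"
  by (simp add: trace_def sum.distrib)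
lemma tr_diff: "trace (A - B) = trace A - trace B"
  by (simp add: trace_def sum_subtractf)
lemma tr_scale: "trace (r *\<^sub>R A) = r *\<^sub>R trace A"
  by (simp add: trace_def scaleR_sum_right)
lemma tr_comm: "trace ((A::complex^'n^'n) ** B) = trace (B ** A)"
  unfolding trace_def matrix_matrix_mult_def
  by (simp, subst sum.swap) (simp add: mult.commute)

definition herm :: "complex^'n^'n \<Rightarrow> bool" where
  "herm M \<longleftrightarrow> (\<forall>i j. M$i$j = cnj (M$j$i))"
definition qf :: "complex^'n^'n \<Rightarrow> complex^'n \<Rightarrow> complex" where
  "qf R v = (\<Sum>i\<in>UNIV. \<Sum>j\<in>UNIV. cnj (v$i) * R$i$j * v$j)"
definition bf :: "complex^'n^'n \<Rightarrow> complex^'n \<Rightarrow> complex^'n \<Rightarrow> complex" where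
  "bf R x v = (\<Sum>i\<in>UNIV. \<Sum>j\<in>UNIV. cnj (x$i) * R$i$j * v$j)"

lemma herm_cnj: "herm M \<Longrightarrow> cnj (M$i$j) = M$j$i"
  unfolding herm_def by (metis complex_cnj_cnj)

lemma swap3: "(\<Sum>i\<in>A. \<Sum>k\<in>B. \<Sum>l\<in>C. f i k l) = (\<Sum>l\<in>C. \<Sum>i\<in>A. \<Sum>k\<in>B. f i k l)"
proof -
  have "(\<Sum>i\<in>A. \<Sum>k\<in>B. \<Sum>l\<in>C. f i k l) = (\<Sum>i\<in>A. \<Sum>l\<in>C. \<Sum>k\<in>B. f i k l)"
    by (rule sum.cong[OF refl], rule sum.swap)
  also have "\<dots> = (\<Sum>l\<in>C. \<Sum>i\<in>A. \<Sum>k\<in>B. f i k l)" by (rule sum.swap)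
  finally show ?thesis .
qed

lemma tr_sq_qf:
  fixes R N :: "complex^'n^'n"
  assumes "herm N"
  shows "trace (R ** (N ** N)) = (\<Sum>l\<in>UNIV. qf R (column l N))"
proof -
  have "trace (R ** (N ** N)) = (\<Sum>i\<in>UNIV. \<Sum>k\<in>UNIV. \<Sum>l\<in>UNIV. R$i$k * (N$k$l * N$l$i))"
    by (simp add: trace_def matrix_matrix_mult_def sum_distrib_left)
  also have "\<dots> = (\<Sum>l\<in>UNIV. \<Sum>i\<in>UNIV. \<Sum>k\<in>UNIV. R$i$k * (N$k$l * N$l$i))"
    by (rule swap3)
  also have "\<dots> = (\<Sum>l\<in>UNIV. qf R (column l N))"
    using herm_cnj[OF assms] by (simp add: qf_def column_def mult_ac)
  finally show ?thesis .
qed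

lemma state_herm: "is_state R \<Longrightarrow> herm R" unfolding is_state_def herm_def by blast
lemma state_qf: "is_state R \<Longrightarrow> 0 \<le> Re (qf R v)" unfolding is_state_def qf_def by blast

lemma psd_tr:
  assumes "is_state R" "herm N"
  shows "0 \<le> Re (trace (R ** (N ** N)))"
  unfolding tr_sq_qf[OF assms(2)] Re_sum by (rule sum_nonneg) (rule state_qf[OF assms(1)])

lemma qf_expand:
  fixes R :: "complex^'n^'n"
  assumes "herm R"
  shows "Re (qf R (x + of_real t *s u)) = Re (qf R x) + 2*t*Re (bf R x u) + t^2 * Re (qf R u)"
proof -
  have 1: "qf R (x + of_real t *s u) = qf R x + of_real t * bf R x u + of_real t * bf R u x + of_real (t^2) * qf R u"
    by (simp add: qf_def bf_def algebra_simps sum.distrib sum_distrib_left power2_eq_square)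
  have "cnj (bf R u x) = (\<Sum>i\<in>UNIV. \<Sum>j\<in>UNIV. cnj (x$j) * R$j$i * u$i)"
    using herm_cnj[OF assms] by (simp add: bf_def mult_ac)
  also have "\<dots> = bf R x u" unfolding bf_def by (rule sum.swap)
  finally have "Re (cnj (bf R u x)) = Re (bf R x u)" by simp
  then have 2: "Re (bf R u x) = Re (bf R x u)" by simp
  show ?thesis unfolding 1 using 2 by simp
qed

lemma qf_zero:
  fixes u :: "complex^(2\<times>2)"
  assumes st: "is_state R" and z: "Re (qf R u) = 0"
  shows "R *v u = 0"
proof -
  define x where "x = R *v u"
  define S where "S = (\<Sum>i\<in>UNIV. (cmod (x$i))^2)"
  have bfx: "Re (bf R x u) = S"
  proof -
    have xi: "\<And>i. x$i = (\<Sum>j\<in>UNIV. R$i$j * u$j)" by (simp add: x_def matrix_vector_mult_def)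
    have "bf R x u = (\<Sum>i\<in>UNIV. cnj (x$i) * (\<Sum>j\<in>UNIV. R$i$j * u$j))"
      unfolding bf_def by (simp add: sum_distrib_left mult.assoc)
    then have "bf R x u = (\<Sum>i\<in>UNIV. cnj (x$i) * x$i)" by (simp only: xi)
    then show ?thesis unfolding S_def cmod_power2 by (simp add: Re_sum power2_eq_square)
  qed
  have S0: "0 \<le> S" unfolding S_def by (simp add: sum_nonneg)
  have key: "\<And>t. 0 \<le> Re (qf R x) + 2*t*S"
  proof -
    fix t :: real
    have "0 \<le> Re (qf R (x + of_real t *s u))" by (rule state_qf[OF st])
    then show "0 \<le> Re (qf R x) + 2*t*S"
      using qf_expand[OF state_herm[OF st], of x t u] z bfx by simp
  qed
  have "S = 0"
  proof (rule ccontr)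
    assume "S \<noteq> 0"
    then have Sp: "S > 0" using S0 by simp
    define t where "t = - (\<bar>Re (qf R x)\<bar> + 1) / (2*S)"
    have "2*t*S = - (\<bar>Re (qf R x)\<bar> + 1)" using Sp by (simp add: t_def field_simps)
    then show False using key[of t] by linarith
  qed
  then have "\<forall>i\<in>UNIV. (cmod (x$i))^2 = 0"
    unfolding S_def by (subst sum_nonneg_eq_0_iff[symmetric]) auto
  then have "x = 0" unfolding vec_eq_iff by auto
  then show ?thesis by (simp add: x_def)
qed

lemma zero_lemma:
  fixes N :: "complex^(2\<times>2)^(2\<times>2)"
  assumes st: "is_state R" and h: "herm N" and z: "Re (trace (R ** (N ** N))) = 0"
  shows "R ** N = 0"
proof -
  have "Re (\<Sum>l\<in>UNIV. qf R (column l N)) = 0" using z tr_sq_qf[OF h] by simp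
  then have "(\<Sum>l\<in>UNIV. Re (qf R (column l N))) = 0" by (simp add: Re_sum)
  then have "\<forall>l\<in>UNIV. Re (qf R (column l N)) = 0"
    by (subst sum_nonneg_eq_0_iff[symmetric]) (auto intro: state_qf[OF st])
  then have "\<And>l. R *v column l N = 0" using qf_zero[OF st] by blast
  moreover have "\<And>i l. (R ** N)$i$l = (R *v column l N)$i"
    by (simp add: matrix_matrix_mult_def matrix_vector_mult_def column_def)
  ultimately show ?thesis unfolding vec_eq_iff by simp
qed

lemma zero_lemma2:
  fixes N :: "complex^(2\<times>2)^(2\<times>2)"
  assumes st: "is_state R" and h: "herm N" and z: "R ** N = 0"
  shows "N ** R = 0"
proof -
  have e: "(N ** R)$i$j = 0" for i j
  proof -
    have "(N ** R)$i$j = (\<Sum>k\<in>UNIV. N$i$k * R$k$j)" by (simp add: matrix_matrix_mult_def)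
    also have "\<dots> = (\<Sum>k\<in>UNIV. cnj (R$j$k) * cnj (N$k$i))"
      using herm_cnj[OF h] herm_cnj[OF state_herm[OF st]] by (simp add: mult.commute)
    also have "\<dots> = cnj ((R ** N)$j$i)" by (simp add: matrix_matrix_mult_def)
    also have "\<dots> = 0" using z by simp
    finally show ?thesis .
  qed
  show ?thesis unfolding vec_eq_iff using e by simp
qed

lemma mm_add_r: "((A::complex^'n^'m) + B) ** C = A ** C + B ** C"
  by (simp add: vec_eq_iff matrix_matrix_mult_def sum.distrib algebra_simps)
lemma mm_diff_r: "((A::complex^'n^'m) - B) ** C = A ** C - B ** C"
  by (simp add: vec_eq_iff matrix_matrix_mult_def sum_subtractf algebra_simps)
lemma mm_diff_l: "(C::complex^'n^'m) ** (A - B) = C ** A - C ** B"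
  by (simp add: vec_eq_iff matrix_matrix_mult_def sum_subtractf algebra_simps)
lemma mm_scale_l: "(k *\<^sub>R (A::complex^'n^'m)) ** B = k *\<^sub>R (A ** B)"
  by (simp add: scalar_matrix_assoc)
lemma mm_scale_r: "(A::complex^'n^'m) ** (k *\<^sub>R B) = k *\<^sub>R (A ** B)"
  by (simp add: matrix_scalar_ac scalar_matrix_assoc)

lemmas mmsimps = matrix_add_ldistrib mm_add_r mm_diff_r mm_diff_l mm_scale_l mm_scale_r kron_mult
  kron_add1 kron_add2 kron_diff1 kron_diff2 kron_scale1 kron_scale2

lemma kk: "(kron X1 Y1 + r *\<^sub>R kron X2 Y2) ** (kron X3 Y3 + t *\<^sub>R kron X4 Y4) =
   kron (X1**X3) (Y1**Y3) + t *\<^sub>R kron (X1**X4) (Y1**Y4) + r *\<^sub>R kron (X2**X3) (Y2**Y3)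
   + (r*t) *\<^sub>R kron (X2**X4) (Y2**Y4)"
  by (simp add: mmsimps algebra_simps)

definition TT :: "complex^(2\<times>2)^(2\<times>2) \<Rightarrow> complex^(2\<times>2)^(2\<times>2) \<Rightarrow> real" where
  "TT R X = Re (trace (R ** X))"

lemma TT_add: "TT R (X + Y) = TT R X + TT R Y"
  by (simp add: TT_def matrix_add_ldistrib tr_add)
lemma TT_diff: "TT R (X - Y) = TT R X - TT R Y"
  by (simp add: TT_def mm_diff_l tr_diff)
lemma TT_scale: "TT R (k *\<^sub>R X) = k * TT R X"
  by (simp add: TT_def mm_scale_r tr_scale)
lemma state_tr: "is_state R \<Longrightarrow> trace R = 1" unfolding is_state_def by blast
lemma TT_id: "is_state R \<Longrightarrow> TT R (mat 1) = 1"
  by (simp add: TT_def state_tr)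

lemma herm_add: assumes "herm A" "herm B" shows "herm (A + B)"
  unfolding herm_def using herm_cnj[OF assms(1)] herm_cnj[OF assms(2)] by simp
lemma herm_diff: assumes "herm A" "herm B" shows "herm (A - B)"
  unfolding herm_def using herm_cnj[OF assms(1)] herm_cnj[OF assms(2)] by simp
lemma herm_scale: assumes "herm A" shows "herm (r *\<^sub>R A)"
  unfolding herm_def using herm_cnj[OF assms(1)] by simp
lemma herm_kron: assumes "herm A" "herm B" shows "herm (kron A B)"
  unfolding herm_def kron_def using herm_cnj[OF assms(1)] herm_cnj[OF assms(2)] by simp
lemma herm_id: "herm (mat 1 :: complex^2^2)" unfolding herm_def by (simp add: mat_def)
lemma herm_bloch: "herm (bloch u)"
  unfolding herm_def by (simp add: all2 complex_eq_iff)

lemma sc_e: "((r::real) *\<^sub>R (M::complex^'n^'m))$i$j = of_real r * M$i$j"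
proof -
  have "(r *\<^sub>R M)$i$j = r *\<^sub>R (M$i$j)" by simp
  then show ?thesis by (metis scaleR_conv_of_real)
qed

lemma result_same: "result_op a R_same = (1/2) *\<^sub>R (mat 1 + kron (bloch a) (bloch a))"
proof -
  have "result_op a R_same = (1/2) *\<^sub>R (kron (mat 1) (mat 1) + kron (bloch a) (bloch a))"
    unfolding result_op_def effect1_def effect2_def vec_eq_iff
    by (simp add: sc_e kron_def algebra_simps)
  then show ?thesis by (simp add: kron_id)
qed
lemma result_diff: "result_op a R_diff = (1/2) *\<^sub>R (mat 1 - kron (bloch a) (bloch a))"
proof -
  have "result_op a R_diff = (1/2) *\<^sub>R (kron (mat 1) (mat 1) - kron (bloch a) (bloch a))"
    unfolding result_op_def effect1_def effect2_def vec_eq_iff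
    by (simp add: sc_e kron_def algebra_simps)
  then show ?thesis by (simp add: kron_id)
qed

lemma two_mat: "(2::complex^'n^'m) * X = 2 *\<^sub>R X"
  unfolding vec_eq_iff by (simp add: scaleR_conv_of_real)
lemma TT_two: "TT R (2 * X) = 2 * TT R X"
  by (simp add: two_mat TT_scale)
lemma tr_zero[simp]: "trace (0::complex^'n^'n) = 0" by (simp add: trace_def)
lemma TT_neg: "TT R (- X) = - TT R X"
  by (metis TT_scale scaleR_minus1_left mult_minus1)
lemma kron_neg1: "kron (- A) B = - kron A B" by (simp add: vec_eq_iff kron_def)
lemma kron_neg2: "kron A (- B) = - kron A B" by (simp add: vec_eq_iff kron_def)

lemma upper:
  fixes R :: "complex^(2\<times>2)^(2\<times>2)" and a b :: "real^3" and \<sigma> :: real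
  assumes st: "is_state R" and na: "norm a = 1" and nb: "norm b = 1" and sg: "\<sigma>*\<sigma> = 1"
    and hQ: "TT R ((1/2) *\<^sub>R (mat 1 + \<sigma> *\<^sub>R kron (bloch b) (bloch b))) = 0"
  shows "TT R ((1/2) *\<^sub>R (mat 1 + \<sigma> *\<^sub>R kron (bloch a) (bloch a))) \<le> 1 - (a \<bullet> b)^2"
proof -
  define c where "c = a \<bullet> b"
  define u where "u = a - c *\<^sub>R b"
  define s2 where "s2 = 1 - c^2"
  define Sa where "Sa = bloch a"
  define Sb where "Sb = bloch b"
  define Su where "Su = bloch u"
  define I2 where "I2 = (mat 1 :: complex^2^2)"
  have aa: "a \<bullet> a = 1" using na by (simp add: norm_eq_sqrt_inner)
  have bb: "b \<bullet> b = 1" using nb by (simp add: norm_eq_sqrt_inner)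
  have uu: "u \<bullet> u = s2" unfolding u_def s2_def c_def
    by (simp add: inner_diff_left inner_diff_right aa bb inner_commute power2_eq_square)
  have bu: "b \<bullet> u = 0" unfolding u_def c_def
    by (simp add: inner_diff_right bb inner_commute)
  have SbSb: "Sb ** Sb = I2" unfolding Sb_def I2_def by (simp add: bloch_sq bb)
  have SuSu: "Su ** Su = s2 *\<^sub>R I2" unfolding Su_def I2_def by (simp add: bloch_sq uu)
  have anti: "Sb ** Su + Su ** Sb = 0" unfolding Sb_def Su_def by (simp add: bloch_anti bu)
  have anti': "Su ** Sb = - (Sb ** Su)" using anti by (simp add: eq_neg_iff_add_eq_0 add.commute)
  have SaE: "Sa = c *\<^sub>R Sb + Su" unfolding Sa_def Sb_def Su_def u_def by (simp add: bloch_lin)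
  define B where "B = kron Sb Sb"
  define U where "U = kron Su Su"
  define C where "C = kron Sb Su + kron Su Sb"
  define G where "G = kron Sb I2 + \<sigma> *\<^sub>R kron I2 Sb"
  define K where "K = kron Su I2 + \<sigma> *\<^sub>R kron I2 Su"
  define N where "N = kron Su I2 + (-\<sigma>) *\<^sub>R kron I2 Su"
  have I4: "kron I2 I2 = mat 1" unfolding I2_def by (rule kron_id)
  have hSb: "herm Sb" unfolding Sb_def by (rule herm_bloch)
  have hSu: "herm Su" unfolding Su_def by (rule herm_bloch)
  have hI: "herm I2" unfolding I2_def by (rule herm_id)
  have hG: "herm G" unfolding G_def by (intro herm_add herm_scale herm_kron hSb hI)
  have hN: "herm N" unfolding N_def by (intro herm_add herm_scale herm_kron hSu hI)
  define T where "T = TT R"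
  have T1: "T (mat 1) = 1" unfolding T_def using st by (rule TT_id)
  have TGG: "T (G ** G) = 2 + 2*\<sigma>*T B"
    unfolding G_def kk B_def T_def using SbSb sg I4 T1[unfolded T_def] unfolding I2_def
    by (simp add: TT_add TT_diff TT_scale TT_two)
  have TB: "\<sigma> * T B = -1"
    using hQ T1 unfolding T_def B_def Sb_def by (simp add: TT_add TT_diff TT_scale TT_two)
  have "T (G ** G) = 0" using TGG TB by (simp add: algebra_simps)
  then have RG: "R ** G = 0" using zero_lemma[OF st hG] unfolding T_def TT_def by simp
  have GR: "G ** R = 0" by (rule zero_lemma2[OF st hG RG])
  have TGK: "T (G ** K) = 0" unfolding T_def TT_def
    by (simp add: matrix_mul_assoc RG)
  have TKG: "T (K ** G) = 0" unfolding T_def TT_def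
    by (simp add: matrix_mul_assoc tr_comm[of "R ** K" G] GR)
  have TGK2: "T (G ** K) = T (kron (Sb ** Su) I2) + \<sigma> * T (kron Sb Su) + \<sigma> * T (kron Su Sb) + T (kron I2 (Sb ** Su))"
    unfolding G_def K_def kk T_def using sg unfolding I2_def by (simp add: TT_add TT_diff TT_scale TT_two)
  have TKG2: "T (K ** G) = - T (kron (Sb ** Su) I2) + \<sigma> * T (kron Su Sb) + \<sigma> * T (kron Sb Su) - T (kron I2 (Sb ** Su))"
    unfolding G_def K_def kk T_def using sg anti' unfolding I2_def by (simp add: TT_add TT_diff TT_scale TT_two kron_neg1 kron_neg2 TT_neg)
  have TC: "\<sigma> * (T (kron Sb Su) + T (kron Su Sb)) = 0"
    using TGK TKG TGK2 TKG2 by (simp add: algebra_simps)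
  have TNN: "T (N ** N) = 2 * s2 - 2 * \<sigma> * T U"
    unfolding N_def kk U_def T_def using sg SuSu I4 T1[unfolded T_def] unfolding I2_def
    by (simp add: TT_add TT_diff TT_scale TT_two kron_scale1 kron_scale2)
  have "0 \<le> T (N ** N)" unfolding T_def TT_def by (rule psd_tr[OF st hN])
  then have TU: "\<sigma> * T U \<le> s2" using TNN by simp
  have TA: "T (kron Sa Sa) = c^2 * T B + c * T (kron Sb Su) + c * T (kron Su Sb) + T U"
    unfolding SaE T_def B_def U_def
    by (simp add: kron_add1 kron_add2 kron_scale1 kron_scale2 TT_add TT_scale power2_eq_square algebra_simps)
  have goal: "T ((1/2) *\<^sub>R (mat 1 + \<sigma> *\<^sub>R kron Sa Sa)) = (1 + \<sigma> * T (kron Sa Sa)) / 2"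
    unfolding T_def using T1[unfolded T_def] by (simp add: TT_add TT_diff TT_scale TT_two)
  have "\<sigma> * T (kron Sa Sa) = c^2 * (\<sigma> * T B) + c * (\<sigma> * (T (kron Sb Su) + T (kron Su Sb))) + \<sigma> * T U"
    unfolding TA by (simp add: algebra_simps)
  also have "\<dots> = - (c^2) + \<sigma> * T U" using TB TC by simp
  finally have "\<sigma> * T (kron Sa Sa) \<le> - (c^2) + s2" using TU by simp
  then have "T ((1/2) *\<^sub>R (mat 1 + \<sigma> *\<^sub>R kron Sa Sa)) \<le> s2" unfolding goal s2_def by simp
  then show ?thesis unfolding T_def Sa_def s2_def c_def .
qed

definition ps :: "2\<times>2 \<Rightarrow> real" where
  "ps p = (if p = (0,1) then 1 else if p = (1,0) then -1 else 0)"
definition Ps :: "complex^(2\<times>2)^(2\<times>2)" where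
  "Ps = (\<chi> p q. complex_of_real (ps p * ps q / 2))"

lemma all22: "(\<forall>p::2\<times>2. P p) \<longleftrightarrow> P (0,0) \<and> P (0,1) \<and> P (1,0) \<and> P (1,1)"
  using all2 by auto

lemma ps_e[simp]: "ps (0,0) = 0" "ps (0,1) = 1" "ps (1,0) = -1" "ps (1,1) = 0"
  by (simp_all add: ps_def)

lemma BPs:
  assumes nb: "b$1*b$1 + b$2*b$2 + b$3*b$3 = 1"
  shows "kron (bloch b) (bloch b) ** Ps = - Ps"
  unfolding vec_eq_iff all22
  using nb by (simp add: matrix_matrix_mult_def sum22 kron_def Ps_def complex_eq_iff algebra_simps) (simp add: field_simps)

lemma PsB:
  assumes nb: "b$1*b$1 + b$2*b$2 + b$3*b$3 = 1"
  shows "Ps ** kron (bloch b) (bloch b) = - Ps"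
  unfolding vec_eq_iff all22
  using nb by (simp add: matrix_matrix_mult_def sum22 kron_def Ps_def complex_eq_iff algebra_simps) (simp add: field_simps)

lemma PsPs: "Ps ** Ps = Ps"
  unfolding vec_eq_iff all22
  by (simp add: matrix_matrix_mult_def sum22 Ps_def)

lemma trPsA:
  assumes na: "a$1*a$1 + a$2*a$2 + a$3*a$3 = 1"
  shows "trace (Ps ** kron (bloch a) (bloch a)) = -1"
  using na by (simp add: trace_def matrix_matrix_mult_def sum22 kron_def Ps_def complex_eq_iff algebra_simps)

lemma trPs: "trace Ps = 1"
  by (simp add: trace_def sum22 Ps_def)

lemma tr_bloch: "trace (bloch u) = 0"
  by (simp add: trace_def sum2)

lemma tr_bloch2: "trace (bloch b ** bloch a) = of_real (2 * (a \<bullet> b))"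
  by (simp add: trace_def sum2 matrix_matrix_mult_def inner3 complex_eq_iff algebra_simps)

lemma tr_id4: "trace (mat 1 :: complex^(2\<times>2)^(2\<times>2)) = 4"
  by (simp add: trace_def mat_def)

lemma herm_Ps: "herm Ps" unfolding herm_def by (simp add: Ps_def)

lemma qf_sq:
  fixes P :: "complex^'n^'n"
  assumes h: "herm P"
  shows "qf (P ** P) v = (\<Sum>k\<in>UNIV. cnj ((P *v v)$k) * (P *v v)$k)"
proof -
  have c: "cnj ((P *v v)$k) = (\<Sum>i\<in>UNIV. cnj (v$i) * P$i$k)" for k
    using herm_cnj[OF h] by (simp add: matrix_vector_mult_def mult.commute)
  have "qf (P ** P) v = (\<Sum>i\<in>UNIV. \<Sum>j\<in>UNIV. \<Sum>k\<in>UNIV. cnj (v$i) * P$i$k * (P$k$j * v$j))"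
    by (simp add: qf_def matrix_matrix_mult_def sum_distrib_left sum_distrib_right mult_ac)
  also have "\<dots> = (\<Sum>k\<in>UNIV. \<Sum>i\<in>UNIV. \<Sum>j\<in>UNIV. cnj (v$i) * P$i$k * (P$k$j * v$j))"
    by (rule swap3)
  also have "\<dots> = (\<Sum>k\<in>UNIV. (\<Sum>i\<in>UNIV. cnj (v$i) * P$i$k) * (\<Sum>j\<in>UNIV. P$k$j * v$j))"
    by (simp add: sum_product)
  also have "\<dots> = (\<Sum>k\<in>UNIV. cnj ((P *v v)$k) * (P *v v)$k)"
    using c by (simp add: matrix_vector_mult_def)
  finally show ?thesis .
qed

lemma psd_idem:
  fixes P :: "complex^'n^'n"
  assumes h: "herm P" and idem: "P ** P = P"
  shows "0 \<le> Re (qf P v)"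
proof -
  have "qf P v = (\<Sum>k\<in>UNIV. cnj ((P *v v)$k) * (P *v v)$k)"
    using qf_sq[OF h, of v] idem by simp
  then show ?thesis by (simp add: Re_sum sum_nonneg)
qed

lemma ofr_e: "(of_real r :: complex^'n^'m)$i$j = of_real r"
  by (simp add: of_real_def)

definition rho0 :: "real^3 \<Rightarrow> complex^(2\<times>2)^(2\<times>2)" where
  "rho0 b = (1/2) *\<^sub>R (mat 1 - kron (bloch b) (bloch b)) - Ps"

lemma rho0_idem:
  assumes nb: "b$1*b$1 + b$2*b$2 + b$3*b$3 = 1"
  shows "rho0 b ** rho0 b = rho0 b"
proof -
  have BB: "kron (bloch b) (bloch b) ** kron (bloch b) (bloch b) = mat 1"
  proof -
    have "bloch b ** bloch b = mat 1" using nb by (simp add: bloch_sq inner3)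
    then show ?thesis by (simp add: kron_mult kron_id)
  qed
  show ?thesis unfolding rho0_def
    apply (simp only: mm_diff_r mm_diff_l mm_scale_l mm_scale_r matrix_mul_lid matrix_mul_rid BB BPs[OF nb] PsB[OF nb] PsPs)
    apply (simp only: vec_eq_iff)
    apply (simp add: scaleR_conv_of_real ofr_e algebra_simps)
    done
qed

lemma csR: "(r::real) *\<^sub>R (z::complex) = of_real r * z" by (rule scaleR_conv_of_real)

lemma herm_id4: "herm (mat 1 :: complex^'n^'n)" unfolding herm_def by (simp add: mat_def)

lemma nb3: "norm (b::real^3) = 1 \<Longrightarrow> b$1*b$1 + b$2*b$2 + b$3*b$3 = 1"
  using norm3[of b] by (simp add: power2_eq_square)

lemma herm_rho0: "herm (rho0 b)"
  unfolding rho0_def by (intro herm_diff herm_scale herm_id4 herm_kron herm_bloch herm_Ps)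

lemma tr_rho0: "trace (rho0 b) = 1"
  by (simp add: rho0_def tr_diff tr_scale tr_id4 tr_kron tr_bloch trPs csR)

lemma rho0_state: "norm b = 1 \<Longrightarrow> is_state (rho0 b)"
  unfolding is_state_def
proof (intro conjI)
  show "\<forall>i j. rho0 b $ i $ j = cnj (rho0 b $ j $ i)" using herm_rho0 unfolding herm_def by blast
  show "trace (rho0 b) = 1" by (rule tr_rho0)
  assume nb: "norm b = 1"
  show "\<forall>v. 0 \<le> Re (\<Sum>i\<in>UNIV. \<Sum>j\<in>UNIV. cnj (v $ i) * rho0 b $ i $ j * v $ j)"
    using psd_idem[OF herm_rho0 rho0_idem[OF nb3[OF nb]]] unfolding qf_def by blast
qed

lemma BB: "norm b = 1 \<Longrightarrow> kron (bloch b) (bloch b) ** kron (bloch b) (bloch b) = mat 1"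
proof -
  assume nb: "norm b = 1"
  have "bloch b ** bloch b = mat 1" using nb3[OF nb] by (simp add: bloch_sq inner3)
  then show ?thesis by (simp add: kron_mult kron_id)
qed

lemma prob_b0: "norm b = 1 \<Longrightarrow> prob b (rho0 b) R_same = 0"
proof -
  assume nb: "norm b = 1"
  show ?thesis unfolding prob_def result_same rho0_def
    by (simp add: mm_diff_r matrix_add_ldistrib mm_diff_l mm_scale_l mm_scale_r BB[OF nb] PsB[OF nb3[OF nb]]
        tr_add tr_diff tr_scale tr_id4 tr_kron tr_bloch trPs)
qed

lemma prob_a0:
  assumes na: "norm a = 1" and nb: "norm b = 1"
  shows "prob a (rho0 b) R_same = 1 - (a \<bullet> b)^2"
proof -
  have "trace (rho0 b ** kron (bloch a) (bloch a)) = - 2 * (of_real (a \<bullet> b))^2 + 1"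
    unfolding rho0_def
    apply (simp only: mm_diff_r mm_scale_l kron_mult tr_diff tr_scale matrix_mul_lid)
    apply (simp add: tr_kron tr_bloch tr_bloch2 trPsA[OF nb3[OF na]] power2_eq_square csR algebra_simps)
    done
  then have t: "Re (trace (rho0 b ** kron (bloch a) (bloch a))) = 1 - 2 * (a \<bullet> b)^2"
    by (simp add: power2_eq_square)
  show ?thesis unfolding prob_def result_same using t
    by (simp add: mm_scale_r matrix_add_ldistrib tr_add tr_scale tr_rho0 power2_eq_square csR algebra_simps)
qed

lemma prob_TT: "prob x R r = TT R ((1/2) *\<^sub>R (mat 1 + (if r = R_same then 1 else -1) *\<^sub>R kron (bloch x) (bloch x)))"
  by (cases r) (simp_all add: prob_def TT_def result_same result_diff)

lemma upper_prob:
  assumes "is_state R" "norm a = 1" "norm b = 1" "prob b R r = 0"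
  shows "prob a R r \<le> 1 - (a \<bullet> b)^2"
proof -
  define \<sigma> :: real where "\<sigma> = (if r = R_same then 1 else -1)"
  have s: "\<sigma> * \<sigma> = 1" by (simp add: \<sigma>_def)
  show ?thesis using upper[OF assms(1-3) s] assms(4) unfolding prob_TT \<sigma>_def by simp
qed

theorem proposition5:
  fixes a b :: "real^3" and \<eta> :: real
  assumes "norm a = 1" and "norm b = 1"
    and "0 \<le> \<eta>" and "\<eta> \<le> 1"
  shows "(\<exists>\<rho> R. is_state \<rho> \<and> prob b \<rho> R = 0 \<and>
            \<eta> * prob a \<rho> R = \<eta> * (sin (vec_angle a b))^2)
       \<and> (\<forall>\<rho> R. is_state \<rho> \<and> prob b \<rho> R = 0 \<longrightarrow>
            \<eta> * prob a \<rho> R \<le> \<eta> * (sin (vec_angle a b))^2)"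
proof -
  have cs: "\<bar>a \<bullet> b\<bar> \<le> 1" using Cauchy_Schwarz_ineq2[of a b] assms(1,2) by simp
  have c2: "(a \<bullet> b)^2 \<le> 1" using cs by (simp add: abs_square_le_1)
  have ang: "(sin (vec_angle a b))^2 = 1 - (a \<bullet> b)^2"
  proof -
    have "vec_angle a b = arccos (a \<bullet> b)" unfolding vec_angle_def using assms(1,2) by simp
    then have "sin (vec_angle a b) = sqrt (1 - (a \<bullet> b)^2)"
      using sin_arccos[of "a \<bullet> b"] cs by auto
    then show ?thesis using c2 by simp
  qed
  show ?thesis
  proof (intro conjI)
    show "\<exists>\<rho> R. is_state \<rho> \<and> prob b \<rho> R = 0 \<and> \<eta> * prob a \<rho> R = \<eta> * (sin (vec_angle a b))^2"
      apply (rule exI[of _ "rho0 b"], rule exI[of _ R_same])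
      using rho0_state[OF assms(2)] prob_b0[OF assms(2)] prob_a0[OF assms(1,2)] ang by simp
    show "\<forall>\<rho> R. is_state \<rho> \<and> prob b \<rho> R = 0 \<longrightarrow> \<eta> * prob a \<rho> R \<le> \<eta> * (sin (vec_angle a b))^2"
      using upper_prob[OF _ assms(1,2)] ang assms(3) by (simp add: mult_left_mono)
  qed
qed

end
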